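(* Let $r>0$, $r\neq1$, and let $x=p/q\in(0,1)$ be a fixed rational number in lowest terms. For $N$ ranging over positive multiples of $q$ (so that $Nx$ is an integer), let $t_{Nx}$ be the mean absorption time of the Moran process with frequency-independent fitnesses and population size $N$ started from state $Nx$. Then, as $N\to\infty$ through multiples of $q$: If $r>1$, $$t_{Nx}=\frac{r}{r-1}N\log N+\frac{r}{r-1}N\Big(\gamma+\log(1-\tfrac1r)+\log(1-x)-\tfrac1r\log x\Big)+\frac{r+1}{2(r-1)^2}\Big(\frac{r}{1-x}+\frac1x-1\Big)+O\Big(\frac1N\Big).$$ If $0<r<1$, $$t_{Nx}=\frac{1}{1-r}N\log N+\frac{1}{1-r}N\Big(\gamma+\log(1-r)+\log x-r\log(1-x)\Big)+\frac{r(1+r)}{2(1-r)^2}\Big(\frac{1}{rx}+\frac{1}{1-x}-1\Big)+O\Big(\frac1N\Big).$$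
   Context: Moran process with frequency-independent fitnesses: fix an integer $N\ge 2$ and $r>0$ (relative fitness of type A; type B has fitness 1). This is the discrete-time Markov chain $(X_n)$ on $\{0,1,\dots,N\}$ with $0$ and $N$ absorbing and, for $1\le i\le N-1$, $P(i\to i+1)=\alpha_i=\frac{i(N-i)r}{N(ir+N-i)}$, $P(i\to i-1)=\beta_i=\frac{i(N-i)}{N(ir+N-i)}$, $P(i\to i)=1-\alpha_i-\beta_i$. With $T=\inf\{n: X_n\in\{0,N\}\}$, the mean absorption time from state $i$ is $t_i=E_i[T]$. $\gamma$ is the Euler–Mascheroni constant; implied constants in $O(\cdot)$ may depend on $r$ and $x$. *)

theory Defs
  imports "HOL-Analysis.Analysis" "HOL-Probability.Probability"
begin

text \<open>Moran process with frequency-independent fitnesses, population size N,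
  relative fitness r of type A.  Transition probabilities from an interior state i.\<close>

definition moran_alpha :: "nat \<Rightarrow> real \<Rightarrow> nat \<Rightarrow> real" where
  "moran_alpha N r i = real i * real (N - i) * r / (real N * (real i * r + real (N - i)))"

definition moran_beta :: "nat \<Rightarrow> real \<Rightarrow> nat \<Rightarrow> real" where
  "moran_beta N r i = real i * real (N - i) / (real N * (real i * r + real (N - i)))"

definition moran_step :: "nat \<Rightarrow> real \<Rightarrow> nat \<Rightarrow> nat pmf" where
  "moran_step N r i =
     (if i = 0 \<or> N \<le> i then return_pmf i
      else embed_pmf (\<lambda>j. if j = i + 1 then moran_alpha N r i
                          else if j = i - 1 then moran_beta N r i
                          else if j = i then 1 - moran_alpha N r i - moran_beta N r i
                          else 0))"

fun moran_dist :: "nat \<Rightarrow> real \<Rightarrow> nat \<Rightarrow> nat \<Rightarrow> nat pmf" where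
  "moran_dist N r i 0 = return_pmf i"
| "moran_dist N r i (Suc n) = bind_pmf (moran_dist N r i n) (moran_step N r)"

text \<open>Mean absorption time t_i = E_i[T] = \<Sum>_{n\<ge>0} P_i(T > n); since 0 and N are
  absorbing, T > n iff X_n \<in> {1,...,N-1}.\<close>
definition moran_time :: "nat \<Rightarrow> real \<Rightarrow> nat \<Rightarrow> real" where
  "moran_time N r i = (\<Sum>n. measure_pmf.prob (moran_dist N r i n) {1..<N})"

end

theory Submission
  imports Defs "HOL-Real_Asymp.Real_Asymp"
begin


lemma moran_ab:
  assumes r: "r > 0" and i: "0 < i" "i < N"
  shows "moran_alpha N r i \<ge> 0" "moran_beta N r i \<ge> 0"
        "moran_alpha N r i + moran_beta N r i \<le> 1"
proof -
  define a where "a = real i"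
  define b where "b = real (N - i)"
  have a: "a > 0" and b: "b > 0" using i by (auto simp: a_def b_def)
  have N: "real N = a + b" using i by (simp add: a_def b_def)
  have den: "(a + b) * (a * r + b) > 0" using a b r by (intro mult_pos_pos) (auto intro: add_pos_pos)
  show "moran_alpha N r i \<ge> 0" "moran_beta N r i \<ge> 0"
    unfolding moran_alpha_def moran_beta_def using den r a b
    by (simp_all add: N flip: a_def b_def)
  have al: "moran_alpha N r i = a * b * r / ((a + b) * (a * r + b))"
    unfolding moran_alpha_def by (simp only: N flip: a_def b_def)
  have be: "moran_beta N r i = a * b / ((a + b) * (a * r + b))"
    unfolding moran_beta_def by (simp only: N flip: a_def b_def)
  have "moran_alpha N r i + moran_beta N r i = a * b * (r + 1) / ((a + b) * (a * r + b))"
    unfolding al be by (simp add: add_divide_distrib[symmetric] algebra_simps)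
  also have "\<dots> \<le> 1"
  proof -
    have "a * b * (r + 1) \<le> (a + b) * (a * r + b)"
    proof -
      have "(a + b) * (a * r + b) - a * b * (r + 1) = a * a * r + b * b"
        by (simp add: algebra_simps)
      moreover have "a * a * r + b * b \<ge> 0" using a b r by (intro add_nonneg_nonneg) auto
      ultimately show ?thesis by linarith
    qed
    thus ?thesis using den by (simp add: divide_le_eq_1)
  qed
  finally show "moran_alpha N r i + moran_beta N r i \<le> 1" .
qed

definition step_fun :: "nat \<Rightarrow> real \<Rightarrow> nat \<Rightarrow> nat \<Rightarrow> real" where
  "step_fun N r i = (\<lambda>j. if j = i + 1 then moran_alpha N r i
                          else if j = i - 1 then moran_beta N r i
                          else if j = i then 1 - moran_alpha N r i - moran_beta N r i
                          else 0)"

lemma pmf_step_interior: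
  assumes r: "r > 0" and i: "0 < i" "i < N"
  shows "pmf (moran_step N r i) j = step_fun N r i j"
proof -
  note ab = moran_ab[OF assms]
  have nn: "\<And>j. 0 \<le> step_fun N r i j" using ab unfolding step_fun_def by auto
  have dist: "i - 1 \<noteq> i" "i + 1 \<noteq> i" "i - 1 \<noteq> i + 1" using i by auto
  have "(\<integral>\<^sup>+ x. ennreal (step_fun N r i x) \<partial>count_space UNIV)
        = (\<Sum>x\<in>{i-1, i, i+1}. ennreal (step_fun N r i x))"
    by (rule nn_integral_count_space') (auto simp: step_fun_def)
  also have "\<dots> = ennreal (\<Sum>x\<in>{i-1, i, i+1}. step_fun N r i x)"
    using nn by (simp add: sum_ennreal)
  also have "(\<Sum>x\<in>{i-1, i, i+1}. step_fun N r i x) = 1"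
    using dist by (simp add: step_fun_def)
  finally have "(\<integral>\<^sup>+ x. ennreal (step_fun N r i x) \<partial>count_space UNIV) = 1" by simp
  hence "pmf (embed_pmf (step_fun N r i)) j = step_fun N r i j"
    using nn by (intro pmf_embed_pmf) auto
  thus ?thesis using i unfolding moran_step_def step_fun_def by auto
qed

lemma set_step:
  assumes r: "r > 0" and x: "x \<le> N"
  shows "set_pmf (moran_step N r x) \<subseteq> {..N}"
proof (cases "x = 0 \<or> N \<le> x")
  case True
  hence "moran_step N r x = return_pmf x" unfolding moran_step_def by (intro if_P)
  thus ?thesis using x by simp
next
  case False
  show ?thesis
  proof
    fix j assume "j \<in> set_pmf (moran_step N r x)"
    hence "pmf (moran_step N r x) j \<noteq> 0" by (simp add: set_pmf_iff)
    hence "step_fun N r x j \<noteq> 0" using pmf_step_interior[OF r, of x N] False by auto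
    thus "j \<in> {..N}" using False unfolding step_fun_def by (auto split: if_splits)
  qed
qed

lemma sum_step:
  assumes r: "r > 0" and x: "x \<le> N"
  shows "(\<Sum>j\<le>N. pmf (moran_step N r x) j * f j) =
     (if 0 < x \<and> x < N then moran_alpha N r x * f (x+1) + moran_beta N r x * f (x-1)
        + (1 - moran_alpha N r x - moran_beta N r x) * f x else f x)"
proof (cases "x = 0 \<or> N \<le> x")
  case True
  hence ret: "moran_step N r x = return_pmf x" unfolding moran_step_def by (intro if_P)
  have "(\<Sum>j\<le>N. pmf (moran_step N r x) j * f j) = (\<Sum>j\<le>N. (if j = x then f j else 0))"
    unfolding ret by (intro sum.cong) (auto simp: indicator_def)
  also have "\<dots> = f x" using x by simp
  finally show ?thesis using True by auto
next
  case False
  have "(\<Sum>j\<le>N. pmf (moran_step N r x) j * f j) = (\<Sum>j\<le>N. step_fun N r x j * f j)"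
    using pmf_step_interior[OF r, of x N] False by simp
  also have "\<dots> = (\<Sum>j\<in>{x-1, x, x+1}. step_fun N r x j * f j)"
    using False by (intro sum.mono_neutral_right) (auto simp: step_fun_def)
  also have "\<dots> = moran_alpha N r x * f (x+1) + moran_beta N r x * f (x-1)
        + (1 - moran_alpha N r x - moran_beta N r x) * f x"
    using False by (cases x) (auto simp: step_fun_def)
  finally show ?thesis using False by auto
qed

lemma set_dist:
  assumes r: "r > 0" and i: "i \<le> N"
  shows "set_pmf (moran_dist N r i n) \<subseteq> {..N}"
proof (induction n)
  case 0 thus ?case using i by simp
next
  case (Suc n)
  have "set_pmf (moran_dist N r i (Suc n)) = (\<Union>x\<in>set_pmf (moran_dist N r i n). set_pmf (moran_step N r x))"
    by (simp add: set_bind_pmf)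
  also have "\<dots> \<subseteq> {..N}"
  proof (rule UN_least)
    fix x assume "x \<in> set_pmf (moran_dist N r i n)"
    hence "x \<le> N" using Suc by auto
    thus "set_pmf (moran_step N r x) \<subseteq> {..N}" by (rule set_step[OF r])
  qed
  finally show ?case .
qed

lemma pmf_dist_Suc:
  assumes r: "r > 0" and i: "i \<le> N"
  shows "pmf (moran_dist N r i (Suc n)) j = (\<Sum>x\<le>N. pmf (moran_step N r x) j * pmf (moran_dist N r i n) x)"
proof -
  have "pmf (moran_dist N r i (Suc n)) j = measure_pmf.expectation (moran_dist N r i n) (\<lambda>x. pmf (moran_step N r x) j)"
    by (simp add: pmf_bind)
  also have "\<dots> = (\<Sum>x\<le>N. pmf (moran_step N r x) j * pmf (moran_dist N r i n) x)"
    using set_dist[OF r i, of n] by (intro integral_measure_pmf_real) auto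
  finally show ?thesis .
qed

lemma moran_time_eq:
  assumes r: "r > 0" and i: "i \<le> N"
    and fnn: "\<And>j. j \<le> N \<Longrightarrow> f j \<ge> 0" and f0: "f 0 = 0" and fN: "f N = 0"
    and rec: "\<And>j. 0 < j \<Longrightarrow> j < N \<Longrightarrow> f j = 1 + moran_alpha N r j * f (j+1)
           + moran_beta N r j * f (j-1) + (1 - moran_alpha N r j - moran_beta N r j) * f j"
  shows "moran_time N r i = f i"
proof -
  define P where "P n = moran_dist N r i n" for n
  define E where "E n = (\<Sum>j\<le>N. pmf (P n) j * f j)" for n
  define u where "u n = measure_pmf.prob (P n) {1..<N}" for n
  have u_sum: "u n = (\<Sum>j\<in>{1..<N}. pmf (P n) j)" for n
    unfolding u_def by (simp add: measure_measure_pmf_finite)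
  have u_nn: "u n \<ge> 0" for n unfolding u_def by simp
  have E_step: "E (Suc n) = E n - u n" for n
  proof -
    have "E (Suc n) = (\<Sum>j\<le>N. (\<Sum>x\<le>N. pmf (moran_step N r x) j * pmf (P n) x) * f j)"
      unfolding E_def P_def using pmf_dist_Suc[OF r i, of n] by presburger
    also have "\<dots> = (\<Sum>x\<le>N. pmf (P n) x * (\<Sum>j\<le>N. pmf (moran_step N r x) j * f j))"
    proof -
      have "(\<Sum>j\<le>N. (\<Sum>x\<le>N. pmf (moran_step N r x) j * pmf (P n) x) * f j)
          = (\<Sum>j\<le>N. \<Sum>x\<le>N. pmf (P n) x * (pmf (moran_step N r x) j * f j))"
        unfolding sum_distrib_right by (simp add: mult_ac)
      also have "\<dots> = (\<Sum>x\<le>N. \<Sum>j\<le>N. pmf (P n) x * (pmf (moran_step N r x) j * f j))"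
        by (rule sum.swap)
      finally show ?thesis by (simp add: sum_distrib_left)
    qed
    also have "\<dots> = (\<Sum>x\<le>N. pmf (P n) x * (f x - (if 0 < x \<and> x < N then 1 else 0)))"
    proof (intro sum.cong refl)
      fix x assume "x \<in> {..N}"
      thus "pmf (P n) x * (\<Sum>j\<le>N. pmf (moran_step N r x) j * f j) =
            pmf (P n) x * (f x - (if 0 < x \<and> x < N then 1 else 0))"
        using sum_step[OF r, of x N f] rec[of x] by auto
    qed
    also have "\<dots> = E n - (\<Sum>x\<le>N. pmf (P n) x * (if 0 < x \<and> x < N then 1 else 0))"
      unfolding E_def by (simp add: algebra_simps sum_subtractf)
    also have "(\<Sum>x\<le>N. pmf (P n) x * (if 0 < x \<and> x < N then 1 else 0)) = (\<Sum>x\<in>{1..<N}. pmf (P n) x)"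
      by (rule sum.mono_neutral_cong_right) auto
    finally show ?thesis by (simp add: u_sum)
  qed
  have E_nn: "E n \<ge> 0" for n unfolding E_def using fnn by (intro sum_nonneg) auto
  have tele: "(\<Sum>n<M. u n) = E 0 - E M" for M
    by (induction M) (auto simp: E_step)
  have E0: "E 0 = f i" unfolding E_def P_def using i by (simp add: indicator_def)
  have bnd: "(\<Sum>n<M. u n) \<le> f i" for M using tele[of M] E_nn[of M] E0 by simp
  have summ: "summable u" by (rule summableI_nonneg_bounded[OF u_nn bnd])
  hence u0: "u \<longlonglongrightarrow> 0" by (rule summable_LIMSEQ_zero)
  define B where "B = (\<Sum>j\<le>N. f j)"
  have E_le: "E n \<le> B * u n" for n
  proof -
    have "E n = (\<Sum>j\<in>{1..<N}. pmf (P n) j * f j)"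
      unfolding E_def using f0 fN
      by (intro sum.mono_neutral_right) (auto simp: not_less less_Suc_eq_0_disj not_le le_Suc_eq dest: le_antisym)
    also have "\<dots> \<le> (\<Sum>j\<in>{1..<N}. pmf (P n) j * B)"
    proof (intro sum_mono mult_left_mono)
      fix j assume j: "j \<in> {1..<N}"
      show "f j \<le> B" unfolding B_def using j fnn
        by (intro member_le_sum) auto
    qed simp
    finally show ?thesis by (simp add: u_sum sum_distrib_left mult_ac)
  qed
  have "E \<longlonglongrightarrow> 0"
  proof (rule tendsto_sandwich[of "\<lambda>_. 0" _ _ "\<lambda>n. B * u n"])
    show "\<forall>\<^sub>F n in sequentially. 0 \<le> E n" using E_nn by simp
    show "\<forall>\<^sub>F n in sequentially. E n \<le> B * u n" using E_le by simp
    show "(\<lambda>n. B * u n) \<longlonglongrightarrow> 0" using tendsto_mult_right_zero[OF u0] by simp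
  qed simp
  hence "(\<lambda>M. \<Sum>n<M. u n) \<longlonglongrightarrow> f i - 0"
    unfolding tele E0 by (intro tendsto_diff) auto
  hence "u sums f i" by (simp add: sums_def)
  thus ?thesis unfolding moran_time_def u_def P_def by (simp add: sums_iff)
qed



definition wt :: "nat \<Rightarrow> real \<Rightarrow> nat \<Rightarrow> real" where
  "wt N r j = real N / real (N - j) + real N / (r * real j)"

definition Fs :: "nat \<Rightarrow> real \<Rightarrow> nat \<Rightarrow> real" where
  "Fs N r i = (\<Sum>j\<in>{1..<i}. wt N r j * (1 - (1/r)^(i-j)))"

definition Ds :: "nat \<Rightarrow> real \<Rightarrow> nat \<Rightarrow> real" where
  "Ds N r i = (\<Sum>j\<in>{1..i}. wt N r j * (1/r)^(i-j))"

definition Tt :: "nat \<Rightarrow> real \<Rightarrow> nat \<Rightarrow> real" where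
  "Tt N r i = ((1 - (1/r)^i) / (1 - (1/r)^N) * Fs N r N - Fs N r i) / (1 - 1/r)"

lemma Fs_diff: "Fs N r (Suc i) - Fs N r i = (1 - 1/r) * Ds N r i"
proof -
  have "Fs N r i = (\<Sum>j\<in>{1..i}. wt N r j * (1 - (1/r)^(i-j)))"
    unfolding Fs_def by (rule sum.mono_neutral_left) auto
  moreover have "Fs N r (Suc i) = (\<Sum>j\<in>{1..i}. wt N r j * (1 - (1/r)^(Suc i-j)))"
    unfolding Fs_def by (rule sum.cong) auto
  ultimately have "Fs N r (Suc i) - Fs N r i =
      (\<Sum>j\<in>{1..i}. wt N r j * (1 - (1/r)^(Suc i-j)) - wt N r j * (1 - (1/r)^(i-j)))"
    by (simp add: sum_subtractf)
  also have "\<dots> = (\<Sum>j\<in>{1..i}. (1 - 1/r) * (wt N r j * (1/r)^(i-j)))"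
  proof (rule sum.cong[OF refl])
    fix j assume "j \<in> {1..i}"
    hence "Suc i - j = Suc (i - j)" by auto
    thus "wt N r j * (1 - (1/r)^(Suc i-j)) - wt N r j * (1 - (1/r)^(i-j)) =
          (1 - 1/r) * (wt N r j * (1/r)^(i-j))" by (simp add: algebra_simps)
  qed
  finally show ?thesis by (simp add: Ds_def sum_distrib_left)
qed

lemma Ds_Suc: "Ds N r (Suc m) = wt N r (Suc m) + (1/r) * Ds N r m"
proof -
  have "Ds N r (Suc m) = wt N r (Suc m) + (\<Sum>j\<in>{1..m}. wt N r j * (1/r)^(Suc m-j))"
    unfolding Ds_def by (simp add: add.commute)
  also have "(\<Sum>j\<in>{1..m}. wt N r j * (1/r)^(Suc m-j)) = (1/r) * Ds N r m"
    unfolding Ds_def sum_distrib_left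
    by (rule sum.cong) (auto simp: Suc_diff_le)
  finally show ?thesis .
qed

lemma aux_cancel: "(k::real) \<noteq> 0 \<Longrightarrow> (k * A - k * B) / k = A - B"
  by (simp add: right_diff_distrib[symmetric])

lemma Tt_diff:
  assumes "r \<noteq> 1"
  shows "Tt N r (Suc i) - Tt N r i = Fs N r N / (1 - (1/r)^N) * (1/r)^i - Ds N r i"
proof -
  have ne: "1 - 1/r \<noteq> 0" using assms by (auto simp: field_simps)
  have "Tt N r (Suc i) - Tt N r i =
     ((1 - (1/r)^Suc i) / (1 - (1/r)^N) * Fs N r N - (1 - (1/r)^i) / (1 - (1/r)^N) * Fs N r N
      - (Fs N r (Suc i) - Fs N r i)) / (1 - 1/r)"
    unfolding Tt_def by (simp add: diff_divide_distrib)
  also have "\<dots> = ((1 - 1/r) * (Fs N r N / (1 - (1/r)^N) * (1/r)^i) - (1 - 1/r) * Ds N r i) / (1 - 1/r)"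
    unfolding Fs_diff by (simp add: algebra_simps diff_divide_distrib)
  also have "\<dots> = Fs N r N / (1 - (1/r)^N) * (1/r)^i - Ds N r i"
    by (rule aux_cancel[OF ne])
  finally show ?thesis .
qed

lemma alpha_beta_rel:
  assumes r: "r > 0" and i: "0 < i" "i < N"
  shows "moran_alpha N r i = r * moran_beta N r i"
        "moran_beta N r i * r * wt N r i = 1"
proof -
  define a where "a = real i"
  define b where "b = real (N - i)"
  have a: "a > 0" and b: "b > 0" using i by (auto simp: a_def b_def)
  have N: "real N = a + b" using i by (simp add: a_def b_def)
  have p1: "a * r + b > 0" using a b r by (intro add_pos_pos) auto
  show "moran_alpha N r i = r * moran_beta N r i"
    unfolding moran_alpha_def moran_beta_def by simp
  have "moran_beta N r i * r * wt N r i =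
     a * b / ((a + b) * (a * r + b)) * r * ((a + b) / b + (a + b) / (r * a))"
    unfolding moran_beta_def wt_def by (simp only: N flip: a_def b_def)
  also have "r * ((a + b) / b + (a + b) / (r * a)) = (a + b) * (a * r + b) / (a * b)"
    using a b r by (simp add: field_simps)
  hence "a * b / ((a + b) * (a * r + b)) * r * ((a + b) / b + (a + b) / (r * a))
     = (a * b / ((a + b) * (a * r + b))) * ((a + b) * (a * r + b) / (a * b))"
    by (simp only: mult.assoc)
  also have "\<dots> = 1" using a b p1 by simp
  finally show "moran_beta N r i * r * wt N r i = 1" .
qed

lemma Tt_rec:
  assumes r: "r > 0" "r \<noteq> 1" and i: "0 < i" "i < N"
  shows "Tt N r i = 1 + moran_alpha N r i * Tt N r (i+1)
           + moran_beta N r i * Tt N r (i-1) + (1 - moran_alpha N r i - moran_beta N r i) * Tt N r i"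
proof -
  obtain m where m: "i = Suc m" using i by (cases i) auto
  define c where "c = Fs N r N / (1 - (1/r)^N)"
  define \<alpha> where "\<alpha> = moran_alpha N r i"
  define \<beta> where "\<beta> = moran_beta N r i"
  note ab = alpha_beta_rel[OF r(1) i, folded \<alpha>_def \<beta>_def]
  have d1: "Tt N r (i+1) - Tt N r i = c * (1/r) * (1/r)^m - (wt N r i + (1/r) * Ds N r m)"
    using Tt_diff[OF r(2), of N i] unfolding m c_def by (simp add: Ds_Suc)
  have d0: "Tt N r i - Tt N r (i-1) = c * (1/r)^m - Ds N r m"
    using Tt_diff[OF r(2), of N m] unfolding m c_def by simp
  have "\<alpha> * (Tt N r (i+1) - Tt N r i) - \<beta> * (Tt N r i - Tt N r (i-1)) = -1"
    unfolding d1 d0 ab(1) using ab(2) r(1) by (simp add: field_simps)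
  thus ?thesis unfolding \<alpha>_def[symmetric] \<beta>_def[symmetric] by (simp add: algebra_simps)
qed

lemma Tt_0: "Tt N r 0 = 0" by (simp add: Tt_def Fs_def)

lemma Tt_N: assumes "r > 1" "N > 0" shows "Tt N r N = 0"
proof -
  have "(1/r)^N < 1" using assms by (intro power_less_one_iff[THEN iffD2]) auto
  thus ?thesis by (simp add: Tt_def)
qed

lemma wt_nonneg: "r > 0 \<Longrightarrow> wt N r j \<ge> 0"
  unfolding wt_def by simp

lemma Tt_nonneg:
  assumes r: "r > 1" and i: "i \<le> N"
  shows "Tt N r i \<ge> 0"
proof (cases "N = 0")
  case True thus ?thesis using i by (simp add: Tt_0)
next
  case False
  define \<rho> where "\<rho> = 1 / r"
  have \<rho>: "0 < \<rho>" "\<rho> < 1" using r by (auto simp: \<rho>_def)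
  have pN: "\<rho>^N < 1" using \<rho> False by (simp add: power_less_one_iff)
  have pN': "1 - \<rho>^N > 0" using pN by simp
  have "Fs N r i * (1 - \<rho>^N) = (\<Sum>j\<in>{1..<i}. wt N r j * ((1 - \<rho>^(i-j)) * (1 - \<rho>^N)))"
    unfolding Fs_def \<rho>_def[symmetric] sum_distrib_right by (simp add: mult_ac)
  also have "\<dots> \<le> (\<Sum>j\<in>{1..<i}. wt N r j * ((1 - \<rho>^i) * (1 - \<rho>^(N-j))))"
  proof (intro sum_mono mult_left_mono wt_nonneg)
    fix j assume j: "j \<in> {1..<i}"
    define a where "a = i - j"
    define b where "b = N - i"
    have e1: "\<rho>^i = \<rho>^j * \<rho>^a" using j by (simp add: a_def flip: power_add)
    have e2: "\<rho>^N = \<rho>^j * \<rho>^a * \<rho>^b" using j i by (simp add: a_def b_def flip: power_add)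
    have e3: "\<rho>^(N-j) = \<rho>^a * \<rho>^b" using j i by (simp add: a_def b_def flip: power_add)
    have e4: "\<rho>^(i-j) = \<rho>^a" by (simp add: a_def)
    have "(1 - \<rho>^i) * (1 - \<rho>^(N-j)) - (1 - \<rho>^(i-j)) * (1 - \<rho>^N) = \<rho>^a * ((1 - \<rho>^j) * (1 - \<rho>^b))"
      unfolding e1 e2 e3 e4 by (simp add: algebra_simps)
    moreover have "\<rho>^a * ((1 - \<rho>^j) * (1 - \<rho>^b)) \<ge> 0"
      using \<rho> by (intro mult_nonneg_nonneg) (auto simp: power_le_one)
    ultimately show "(1 - \<rho>^(i-j)) * (1 - \<rho>^N) \<le> (1 - \<rho>^i) * (1 - \<rho>^(N-j))" by linarith
  qed (use r in auto)
  also have "\<dots> \<le> (\<Sum>j\<in>{1..<N}. wt N r j * ((1 - \<rho>^i) * (1 - \<rho>^(N-j))))"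
    using i r \<rho> by (intro sum_mono2) (auto intro!: mult_nonneg_nonneg wt_nonneg simp: power_le_one)
  also have "\<dots> = (1 - \<rho>^i) * Fs N r N"
    unfolding Fs_def \<rho>_def[symmetric] sum_distrib_left by (simp add: mult_ac)
  finally have "Fs N r i \<le> (1 - \<rho>^i) / (1 - \<rho>^N) * Fs N r N"
    using pN' by (simp add: field_simps)
  moreover have "1 - 1/r > 0" using r by simp
  ultimately show ?thesis unfolding Tt_def \<rho>_def[symmetric]
    by (intro divide_nonneg_pos) (auto simp: \<rho>_def)
qed



lemma moran_time_gt1:
  assumes r: "r > 1" and i: "i \<le> N" and N: "N > 0"
  shows "moran_time N r i = Tt N r i"
  using r i N
  by (intro moran_time_eq[where f = "Tt N r"] Tt_nonneg Tt_0 Tt_N Tt_rec) auto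

lemma swap_ab:
  assumes r: "r > 0" and j: "0 < j" "j < N"
  shows "moran_alpha N (1/r) (N - j) = moran_beta N r j"
        "moran_beta N (1/r) (N - j) = moran_alpha N r j"
proof -
  define a where "a = real j"
  define b where "b = real (N - j)"
  have a: "a > 0" and b: "b > 0" using j by (auto simp: a_def b_def)
  have N: "real N = a + b" using j by (simp add: a_def b_def)
  have NN: "N - (N - j) = j" using j by simp
  have p1: "a * r + b > 0" using a b r by (intro add_pos_pos) auto
  have p2: "b * (1/r) + a > 0" using a b r by (intro add_pos_pos) auto
  have "moran_alpha N (1/r) (N - j) = b * a * (1/r) / ((a + b) * (b * (1/r) + a))"
    unfolding moran_alpha_def NN by (simp only: N flip: a_def b_def)
  also have "\<dots> = a * b / ((a + b) * (a * r + b))"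
    using a b r p1 p2 by (simp add: field_simps)
  also have "\<dots> = moran_beta N r j"
    unfolding moran_beta_def by (simp only: N flip: a_def b_def)
  finally show "moran_alpha N (1/r) (N - j) = moran_beta N r j" .
  have "moran_beta N (1/r) (N - j) = b * a / ((a + b) * (b * (1/r) + a))"
    unfolding moran_beta_def NN by (simp only: N flip: a_def b_def)
  also have "\<dots> = a * b * r / ((a + b) * (a * r + b))"
    using a b r p1 p2 by (simp add: field_simps)
  also have "\<dots> = moran_alpha N r j"
    unfolding moran_alpha_def by (simp only: N flip: a_def b_def)
  finally show "moran_beta N (1/r) (N - j) = moran_alpha N r j" .
qed

lemma moran_time_lt1:
  assumes r: "0 < r" "r < 1" and i: "i \<le> N" and N: "N > 0"
  shows "moran_time N r i = Tt N (1/r) (N - i)"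
proof (rule moran_time_eq[where f = "\<lambda>j. Tt N (1/r) (N - j)"])
  have r': "1/r > 1" using r by simp
  show "0 \<le> Tt N (1/r) (N - j)" if "j \<le> N" for j using r' by (intro Tt_nonneg) auto
  show "Tt N (1/r) (N - 0) = 0" using r' N by (simp add: Tt_N)
  show "Tt N (1/r) (N - N) = 0" by (simp add: Tt_0)
  fix j assume j: "0 < j" "j < N"
  have rec: "Tt N (1/r) (N-j) = 1 + moran_alpha N (1/r) (N-j) * Tt N (1/r) ((N-j)+1)
           + moran_beta N (1/r) (N-j) * Tt N (1/r) ((N-j)-1)
           + (1 - moran_alpha N (1/r) (N-j) - moran_beta N (1/r) (N-j)) * Tt N (1/r) (N-j)"
    using r' r j by (intro Tt_rec) auto
  have e1: "N - j + 1 = N - (j - 1)" "N - j - 1 = N - (j + 1)" using j by auto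
  show "Tt N (1/r) (N-j) = 1 + moran_alpha N r j * Tt N (1/r) (N - (j+1))
           + moran_beta N r j * Tt N (1/r) (N - (j-1))
           + (1 - moran_alpha N r j - moran_beta N r j) * Tt N (1/r) (N-j)"
    using rec unfolding swap_ab[OF r(1) j] e1 by (simp add: algebra_simps)
qed (use r i in auto)



lemma polyexp_bound4:
  fixes \<rho> :: real assumes "0 < \<rho>" "\<rho> < 1"
  shows "\<exists>C. \<forall>n. real n ^ 4 * \<rho> ^ n \<le> C"
proof -
  have "(\<lambda>n. real n ^ 4 * \<rho> ^ n) \<longlonglongrightarrow> 0" using assms by real_asymp
  hence "Bseq (\<lambda>n. real n ^ 4 * \<rho> ^ n)" by (intro convergent_imp_Bseq convergentI)
  then obtain K where "\<And>n. norm (real n ^ 4 * \<rho> ^ n) \<le> K" unfolding Bseq_def by auto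
  thus ?thesis by (intro exI[of _ K]) (auto intro: order.trans[OF abs_ge_self])
qed

lemma polyexp_bound3:
  fixes \<rho> :: real assumes "0 < \<rho>" "\<rho> < 1"
  shows "\<exists>C. \<forall>n. real n ^ 3 * \<rho> ^ n \<le> C"
proof -
  obtain C where C: "\<And>n. real n ^ 4 * \<rho> ^ n \<le> C" using polyexp_bound4[OF assms] by blast
  have "real n ^ 3 * \<rho> ^ n \<le> C" for n
  proof (cases "n = 0")
    case True thus ?thesis using C[of 0] by simp
  next
    case False
    hence "real n ^ 3 \<le> real n ^ 4" by (intro power_increasing) auto
    hence "real n ^ 3 * \<rho> ^ n \<le> real n ^ 4 * \<rho> ^ n" using assms by (intro mult_right_mono) auto
    thus ?thesis using C[of n] by linarith
  qed
  thus ?thesis by blast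
qed

lemma inv_sq_sum: "K \<ge> 1 \<Longrightarrow> (\<Sum>m\<in>{1..K}. 1 / real m ^ 2) \<le> 2 - 1 / real K"
proof (induction K rule: nat_induct_at_least)
  case base thus ?case by simp
next
  case (Suc K)
  have "(\<Sum>m\<in>{1..Suc K}. 1 / real m ^ 2) = (\<Sum>m\<in>{1..K}. 1 / real m ^ 2) + 1 / real (Suc K) ^ 2"
    by simp
  also have "\<dots> \<le> 2 - 1 / real K + 1 / real (Suc K) ^ 2" using Suc by simp
  also have "\<dots> \<le> 2 - 1 / real (Suc K)"
  proof -
    have K: "real K \<ge> 1" using Suc by simp
    have "1 / real (Suc K) ^ 2 \<le> 1 / (real K * real (Suc K))"
      using K by (intro divide_left_mono) (auto simp: power2_eq_square)
    also have "\<dots> = 1 / real K - 1 / real (Suc K)"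
      using K by (simp add: field_simps)
    finally have "1 / real (Suc K) ^ 2 \<le> 1 / real K - 1 / real (Suc K)" .
    thus ?thesis by simp
  qed
  finally show ?case .
qed

lemma inv_sq_sum': "(\<Sum>m\<in>{1..<K}. 1 / real m ^ 2) \<le> 2"
proof (cases "K \<ge> 1")
  case True
  have "(\<Sum>m\<in>{1..<K}. 1 / real m ^ 2) \<le> (\<Sum>m\<in>{1..K}. 1 / real m ^ 2)"
    by (intro sum_mono2) auto
  also have "\<dots> \<le> 2 - 1 / real K" using inv_sq_sum[OF True] .
  also have "\<dots> \<le> 2" by simp
  finally show ?thesis .
qed simp

lemma mm_bound:
  fixes \<rho> :: real assumes "0 < \<rho>" "\<rho> < 1"
  shows "\<exists>B\<ge>0. \<forall>K. (\<Sum>m\<in>{1..<K}. real m * (real m + 1) * \<rho> ^ m) \<le> B"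
proof -
  obtain C where C: "\<And>n. real n ^ 4 * \<rho> ^ n \<le> C" using polyexp_bound4[OF assms] by blast
  have C0: "C \<ge> 0" using C[of 0] by simp
  have t: "real m * (real m + 1) * \<rho> ^ m \<le> 2 * C * (1 / real m ^ 2)" if "m \<ge> 1" for m
  proof -
    have m: "real m \<ge> 1" using that by simp
    have "real m * (real m + 1) * \<rho> ^ m \<le> (2 * real m ^ 2) * \<rho> ^ m"
      using m assms by (intro mult_right_mono) (auto simp: power2_eq_square)
    also have "\<dots> = 2 * (real m ^ 4 * \<rho> ^ m) / real m ^ 2"
      using m by (simp add: field_simps power2_eq_square eval_nat_numeral)
    also have "\<dots> \<le> 2 * C / real m ^ 2"
      using C[of m] m by (intro divide_right_mono) auto
    finally show ?thesis by simp
  qed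
  have "(\<Sum>m\<in>{1..<K}. real m * (real m + 1) * \<rho> ^ m) \<le> 4 * C" for K
  proof -
    have "(\<Sum>m\<in>{1..<K}. real m * (real m + 1) * \<rho> ^ m) \<le> (\<Sum>m\<in>{1..<K}. 2 * C * (1 / real m ^ 2))"
      using t by (intro sum_mono) auto
    also have "\<dots> = 2 * C * (\<Sum>m\<in>{1..<K}. 1 / real m ^ 2)" by (simp add: sum_distrib_left)
    also have "\<dots> \<le> 2 * C * 2" using C0 inv_sq_sum' by (intro mult_left_mono) auto
    finally show ?thesis by simp
  qed
  thus ?thesis using C0 by (intro exI[of _ "4 * C"]) auto
qed

lemma geom_sum: "K \<ge> 1 \<Longrightarrow> (\<rho>::real) \<noteq> 1 \<Longrightarrow> (\<Sum>m\<in>{1..<K}. \<rho> ^ m) = (\<rho> - \<rho> ^ K) / (1 - \<rho>)"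
proof (induction K rule: nat_induct_at_least)
  case base thus ?case by simp
next
  case (Suc K)
  have "(\<Sum>m\<in>{1..<Suc K}. \<rho> ^ m) = (\<Sum>m\<in>{1..<K}. \<rho> ^ m) + \<rho> ^ K" using Suc by simp
  also have "\<dots> = (\<rho> - \<rho> ^ K) / (1 - \<rho>) + \<rho> ^ K" using Suc by simp
  also have "\<dots> = (\<rho> - \<rho> ^ Suc K) / (1 - \<rho>)" using Suc by (simp add: field_simps)
  finally show ?case .
qed

lemma harm_approx:
  assumes "M \<ge> 2"
  shows "\<bar>harm (M - 1) - (ln (real M) + euler_mascheroni - 1 / (2 * real M))\<bar> \<le> 1 / real M ^ 2"
proof -
  define n where "n = M - 2"
  have n: "M = n + 2" using assms by (simp add: n_def)
  have l: "euler_mascheroni \<ge> harm (Suc n) - ln (real (n + 2)) + 1 / real (2 * (n + 2))"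
    by (rule euler_mascheroni_lower)
  have u: "euler_mascheroni \<le> harm (Suc n) - ln (real (n + 2)) + 1 / real (2 * (n + 1))"
    by (rule euler_mascheroni_upper)
  have hM: "harm (M - 1) = (harm (Suc n) :: real)" using n by simp
  have e1: "real (2 * (n + 2)) = 2 * real M" using n by simp
  have e2: "real (n + 2) = real M" using n by simp
  have d: "1 / real (2 * (n + 1)) - 1 / real (2 * (n + 2)) \<le> 1 / real M ^ 2"
  proof -
    have "1 / real (2 * (n + 1)) - 1 / real (2 * (n + 2)) = 1 / (2 * (real n + 1) * (real n + 2))"
    proof -
      define m where "m = real n + 1"
      have m: "m > 0" "m + 1 > 0" by (auto simp: m_def)
      have "1 / (2 * m) - 1 / (2 * (m + 1)) = 1 / (2 * m * (m + 1))"
        using m by (simp add: field_simps)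
      moreover have "real (2 * (n + 1)) = 2 * m" "real (2 * (n + 2)) = 2 * (m + 1)" "real n + 2 = m + 1"
         "real n + 1 = m"
        by (auto simp: m_def)
      ultimately show ?thesis by (simp only: mult.assoc)
    qed
    also have "\<dots> \<le> 1 / (real n + 2) ^ 2"
    proof (intro divide_left_mono)
      have "0 \<le> real n * real n + 2 * real n" by simp
      thus "(real n + 2) ^ 2 \<le> 2 * (real n + 1) * (real n + 2)"
        by (simp add: power2_eq_square algebra_simps)
    qed auto
    finally show ?thesis unfolding n by (simp add: add.commute)
  qed
  have l': "euler_mascheroni \<ge> harm (Suc n) - ln (real M) + 1 / (2 * real M)"
    using l unfolding e1 e2 .
  have u': "euler_mascheroni \<le> harm (Suc n) - ln (real M) + 1 / real (2 * (n + 1))"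
    using u unfolding e2 .
  have d': "1 / real (2 * (n + 1)) - 1 / (2 * real M) \<le> 1 / real M ^ 2"
    using d unfolding e1 .
  show ?thesis unfolding hM abs_le_iff using l' u' d' by linarith
qed

lemma log_series_bound:
  fixes \<rho> :: real assumes \<rho>: "0 < \<rho>" "\<rho> < 1"
  shows "\<bar>(\<Sum>m\<in>{1..<n}. \<rho> ^ m / real m) + ln (1 - \<rho>)\<bar> \<le> \<rho> ^ n / (1 - \<rho>)"
proof -
  have s0: "(\<lambda>m. - ((- (-\<rho>)) ^ m) / real m) sums ln (1 + (-\<rho>))"
    by (rule ln_series') (use \<rho> in auto)
  have s: "(\<lambda>m. \<rho> ^ m / real m) sums (- ln (1 - \<rho>))"
    using sums_minus[OF s0] by simp
  have summ: "summable (\<lambda>m. \<rho> ^ m / real m)" using s by (rule sums_summable)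
  have "(\<lambda>m. \<rho> ^ (m + n) / real (m + n)) sums (- ln (1 - \<rho>) - (\<Sum>m<n. \<rho> ^ m / real m))"
    using sums_split_initial_segment[OF s, of n] .
  moreover have "(\<Sum>m<n. \<rho> ^ m / real m) = (\<Sum>m\<in>{1..<n}. \<rho> ^ m / real m)"
    by (rule sum.mono_neutral_right) auto
  ultimately have t: "(\<lambda>m. \<rho> ^ (m + n) / real (m + n)) sums (- ln (1 - \<rho>) - (\<Sum>m\<in>{1..<n}. \<rho> ^ m / real m))"
    by simp
  have g: "(\<lambda>m. \<rho> ^ n * \<rho> ^ m) sums (\<rho> ^ n * (1 / (1 - \<rho>)))"
    by (intro sums_mult geometric_sums) (use \<rho> in auto)
  have lo: "0 \<le> - ln (1 - \<rho>) - (\<Sum>m\<in>{1..<n}. \<rho> ^ m / real m)"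
    by (rule sums_le[OF _ sums_zero t]) (use \<rho> in auto)
  have hi: "- ln (1 - \<rho>) - (\<Sum>m\<in>{1..<n}. \<rho> ^ m / real m) \<le> \<rho> ^ n * (1 / (1 - \<rho>))"
  proof (rule sums_le[OF _ t g])
    fix m
    have "\<rho> ^ (m + n) / real (m + n) \<le> \<rho> ^ (m + n)"
    proof (cases "m + n = 0")
      case False
      hence "\<rho> ^ (m + n) / real (m + n) \<le> \<rho> ^ (m + n) / 1"
        using \<rho> by (intro divide_left_mono) auto
      thus ?thesis by simp
    qed (use \<rho> in simp)
    thus "\<rho> ^ (m + n) / real (m + n) \<le> \<rho> ^ n * \<rho> ^ m" by (simp add: power_add mult_ac)
  qed
  show ?thesis using lo hi by (simp add: abs_le_iff)
qed



lemma La_bound: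
  fixes \<rho> a B :: real
  assumes \<rho>: "0 < \<rho>" "\<rho> < 1" and a: "a > 0" and K: "K \<ge> 1"
    and B: "\<And>K. (\<Sum>m\<in>{1..<K}. real m * (real m + 1) * \<rho> ^ m) \<le> B"
  shows "\<bar>(\<Sum>m\<in>{1..<K}. \<rho> ^ m / (a + real m)) - (1 / a) * (\<rho> / (1 - \<rho>))\<bar>
           \<le> B / a\<^sup>2 + \<rho> ^ K / (a * (1 - \<rho>))"
proof -
  define D where "D = (\<Sum>m\<in>{1..<K}. \<rho> ^ m * real m / (a * (a + real m)))"
  have split: "\<rho> ^ m / (a + real m) = \<rho> ^ m / a - \<rho> ^ m * real m / (a * (a + real m))" for m
  proof -
    have am: "a + real m > 0" using a by simp
    have "\<rho> ^ m / a - \<rho> ^ m * real m / (a * (a + real m)) = \<rho> ^ m * (a + real m) / (a * (a + real m)) - \<rho> ^ m * real m / (a * (a + real m))"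
      using a am by simp
    also have "\<dots> = \<rho> ^ m * a / (a * (a + real m))"
      by (simp add: diff_divide_distrib[symmetric] algebra_simps)
    also have "\<dots> = \<rho> ^ m / (a + real m)" using a am by simp
    finally show ?thesis by simp
  qed
  have "(\<Sum>m\<in>{1..<K}. \<rho> ^ m / (a + real m)) = (\<Sum>m\<in>{1..<K}. \<rho> ^ m) / a - D"
    unfolding D_def split by (simp add: sum_subtractf sum_divide_distrib)
  also have "(\<Sum>m\<in>{1..<K}. \<rho> ^ m) = (\<rho> - \<rho> ^ K) / (1 - \<rho>)" using K \<rho> by (intro geom_sum) auto
  finally have eq: "(\<Sum>m\<in>{1..<K}. \<rho> ^ m / (a + real m)) - (1 / a) * (\<rho> / (1 - \<rho>))
       = - (\<rho> ^ K / (a * (1 - \<rho>))) - D"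
    using a \<rho> by (simp add: field_simps)
  have D0: "D \<ge> 0" unfolding D_def using a \<rho> by (intro sum_nonneg) auto
  have "D \<le> (\<Sum>m\<in>{1..<K}. real m * (real m + 1) * \<rho> ^ m / a\<^sup>2)"
    unfolding D_def
  proof (intro sum_mono)
    fix m assume "m \<in> {1..<K}"
    have "\<rho> ^ m * real m / (a * (a + real m)) \<le> \<rho> ^ m * real m / (a * a)"
      using a \<rho> by (intro divide_left_mono mult_left_mono mult_pos_pos) auto
    also have "\<dots> \<le> real m * (real m + 1) * \<rho> ^ m / (a * a)"
      using a \<rho> by (intro divide_right_mono) (auto simp: algebra_simps)
    finally show "\<rho> ^ m * real m / (a * (a + real m)) \<le> real m * (real m + 1) * \<rho> ^ m / a\<^sup>2"
      by (simp add: power2_eq_square)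
  qed
  also have "\<dots> \<le> B / a\<^sup>2" unfolding sum_divide_distrib[symmetric] using B a
    by (intro divide_right_mono) auto
  finally have D1: "D \<le> B / a\<^sup>2" .
  have p: "\<rho> ^ K / (a * (1 - \<rho>)) \<ge> 0" using a \<rho> by auto
  show ?thesis unfolding eq using D0 D1 p by (simp add: abs_le_iff)
qed

lemma Lb_bound:
  fixes \<rho> B :: real
  assumes \<rho>: "0 < \<rho>" "\<rho> < 1" and b: "b \<ge> 1"
    and B: "\<And>K. (\<Sum>m\<in>{1..<K}. real m * (real m + 1) * \<rho> ^ m) \<le> B"
  shows "\<bar>(\<Sum>m\<in>{1..<b}. \<rho> ^ m / real (b - m)) - (1 / real b) * (\<rho> / (1 - \<rho>))\<bar>
           \<le> B / (real b)\<^sup>2 + \<rho> ^ b / (real b * (1 - \<rho>))"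
proof -
  define D where "D = (\<Sum>m\<in>{1..<b}. \<rho> ^ m * (1 / real (b - m) - 1 / real b))"
  have "(\<Sum>m\<in>{1..<b}. \<rho> ^ m / real (b - m)) = (\<Sum>m\<in>{1..<b}. \<rho> ^ m) / real b + D"
  proof -
    have "(\<Sum>m\<in>{1..<b}. \<rho> ^ m / real (b - m)) = (\<Sum>m\<in>{1..<b}. \<rho> ^ m / real b + \<rho> ^ m * (1 / real (b - m) - 1 / real b))"
      by (rule sum.cong) (auto simp: right_diff_distrib)
    thus ?thesis unfolding D_def by (simp add: sum.distrib sum_divide_distrib)
  qed
  also have "(\<Sum>m\<in>{1..<b}. \<rho> ^ m) = (\<rho> - \<rho> ^ b) / (1 - \<rho>)" using b \<rho> by (intro geom_sum) auto
  finally have eq: "(\<Sum>m\<in>{1..<b}. \<rho> ^ m / real (b - m)) - (1 / real b) * (\<rho> / (1 - \<rho>))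
       = - (\<rho> ^ b / (real b * (1 - \<rho>))) + D"
    using b \<rho> by (simp add: field_simps)
  have E: "0 \<le> 1 / real (b - m) - 1 / real b \<and> 1 / real (b - m) - 1 / real b \<le> real m * (real m + 1) / (real b)\<^sup>2"
    if m: "m \<in> {1..<b}" for m
  proof -
    define c where "c = real (b - m)"
    have c: "c > 0" "c \<le> real b" "real b = c + real m" using m by (auto simp: c_def)
    have e: "1 / c - 1 / real b = real m / (real b * c)" using c by (simp add: field_simps)
    have key: "real b \<le> (real m + 1) * c"
    proof -
      have "c \<ge> 1" using m by (simp add: c_def)
      hence "real m * 1 \<le> real m * c" by (intro mult_left_mono) auto
      thus ?thesis using c by (simp add: algebra_simps)
    qed
    have "real m / (real b * c) \<le> real m * (real m + 1) / (real b)\<^sup>2"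
    proof -
      have bpos: "real b > 0" using c by simp
      have "real m / (real b * c) = real m * (real m + 1) / (real b * ((real m + 1) * c))"
        using c by simp
      also have "\<dots> \<le> real m * (real m + 1) / (real b * real b)"
        using key bpos c by (intro divide_left_mono mult_left_mono mult_pos_pos) auto
      finally show ?thesis by (simp add: power2_eq_square)
    qed
    moreover have "real m / (real b * c) \<ge> 0" using c by simp
    ultimately show ?thesis unfolding c_def[symmetric] e by simp
  qed
  have D0: "D \<ge> 0" unfolding D_def using E \<rho> by (intro sum_nonneg mult_nonneg_nonneg) auto
  have "D \<le> (\<Sum>m\<in>{1..<b}. real m * (real m + 1) * \<rho> ^ m / (real b)\<^sup>2)"
    unfolding D_def
  proof (intro sum_mono)
    fix m assume m: "m \<in> {1..<b}"
    have "\<rho> ^ m * (1 / real (b - m) - 1 / real b) \<le> \<rho> ^ m * (real m * (real m + 1) / (real b)\<^sup>2)"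
      using E[OF m] \<rho> by (intro mult_left_mono) auto
    thus "\<rho> ^ m * (1 / real (b - m) - 1 / real b) \<le> real m * (real m + 1) * \<rho> ^ m / (real b)\<^sup>2"
      by (simp add: mult_ac)
  qed
  also have "\<dots> \<le> B / (real b)\<^sup>2" unfolding sum_divide_distrib[symmetric] using B
    by (intro divide_right_mono) auto
  finally have D1: "D \<le> B / (real b)\<^sup>2" .
  have p: "\<rho> ^ b / (real b * (1 - \<rho>)) \<ge> 0" using b \<rho> by auto
  show ?thesis unfolding eq using D0 D1 p by (simp add: abs_le_iff)
qed



lemma sum_inv_Nj:
  assumes "1 \<le> i" "i \<le> N"
  shows "(\<Sum>j\<in>{1..<i}. 1 / real (N - j)) = harm (N - 1) - harm (N - i)"
  using assms
proof (induction i rule: nat_induct_at_least)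
  case base thus ?case by simp
next
  case (Suc i)
  have "(\<Sum>j\<in>{1..<Suc i}. 1 / real (N - j)) = (\<Sum>j\<in>{1..<i}. 1 / real (N - j)) + 1 / real (N - i)"
    using Suc by simp
  also have "\<dots> = harm (N - 1) - harm (N - i) + 1 / real (N - i)" using Suc by simp
  also have "harm (N - i) = harm (N - Suc i) + 1 / real (N - i)"
  proof -
    have "N - i = Suc (N - Suc i)" using Suc by simp
    thus ?thesis by (simp add: harm_Suc inverse_eq_divide)
  qed
  finally show ?case by simp
qed

lemma sum_inv_j:
  assumes "1 \<le> i"
  shows "(\<Sum>j\<in>{1..<i}. 1 / real j) = harm (i - 1)"
proof -
  have "{1..<i} = {1..i-1}" using assms by auto
  thus ?thesis by (simp add: harm_def inverse_eq_divide)
qed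

lemma S_formula:
  assumes r: "r > 0" and i: "1 \<le> i" "i \<le> N"
  shows "(\<Sum>j\<in>{1..<i}. wt N r j) = real N * (harm (N - 1) - harm (N - i)) + real N / r * harm (i - 1)"
proof -
  have "(\<Sum>j\<in>{1..<i}. wt N r j) = real N * (\<Sum>j\<in>{1..<i}. 1 / real (N - j)) + real N / r * (\<Sum>j\<in>{1..<i}. 1 / real j)"
    unfolding wt_def by (simp add: sum.distrib sum_distrib_left)
  thus ?thesis using sum_inv_Nj[OF i] sum_inv_j[OF i(1)] by simp
qed

lemma G_formula:
  assumes i: "i \<le> N"
  shows "(\<Sum>j\<in>{1..<i}. wt N r j * (1/r) ^ (i - j)) =
     real N * (\<Sum>m\<in>{1..<i}. (1/r) ^ m / (real (N - i) + real m))
     + real N / r * (\<Sum>m\<in>{1..<i}. (1/r) ^ m / real (i - m))"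
proof -
  have "(\<Sum>j\<in>{1..<i}. wt N r j * (1/r) ^ (i - j)) = (\<Sum>m\<in>{1..<i}. wt N r (i - m) * (1/r) ^ m)"
    by (rule sum.reindex_bij_witness[of _ "\<lambda>m. i - m" "\<lambda>j. i - j"]) auto
  also have "\<dots> = (\<Sum>m\<in>{1..<i}. real N * ((1/r) ^ m / (real (N - i) + real m)) + real N / r * ((1/r) ^ m / real (i - m)))"
  proof (rule sum.cong[OF refl])
    fix m assume m: "m \<in> {1..<i}"
    have e: "real (N - (i - m)) = real (N - i) + real m" using m i by auto
    show "wt N r (i - m) * (1/r) ^ m = real N * ((1/r) ^ m / (real (N - i) + real m)) + real N / r * ((1/r) ^ m / real (i - m))"
      unfolding wt_def e by (simp add: distrib_right)
  qed
  finally show ?thesis by (simp add: sum.distrib sum_distrib_left)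
qed

lemma Fs_split:
  "Fs N r i = (\<Sum>j\<in>{1..<i}. wt N r j) - (\<Sum>j\<in>{1..<i}. wt N r j * (1/r) ^ (i - j))"
  unfolding Fs_def by (simp add: right_diff_distrib sum_subtractf)



lemma main_identity:
  fixes r N x y L lx l1x g lr :: real
  assumes r: "r > 1" and N: "N > 0" and x: "0 < x" and y: "0 < y"
  shows "((N/r)*(L + g - 1/(2*N)) + N*((L + l1x) + g + 1/(2*(N*y)))
          - (N/r)*((L + lx) + g - 1/(2*(N*x))) - N*(-lr) - (N/r)*((1/N)*((1/r)/(1-1/r)))
          + N*((1/(N*y))*((1/r)/(1-1/r))) + (N/r)*((1/(N*x))*((1/r)/(1-1/r)))) / (1 - 1/r)
   = r/(r-1)*N*L + r/(r-1)*N*(g + lr + l1x - (1/r)*lx) + (r+1)/(2*(r-1)^2)*(r/y+1/x-1)"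
proof -
  have nz: "r - 1 \<noteq> 0" "y \<noteq> 0" "x \<noteq> 0" "N \<noteq> 0" "r \<noteq> 0" using r N x y by auto
  define c where "c = 1 / (r - 1)"
  have c1: "(1/r)/(1-1/r) = c" unfolding c_def using nz by (simp add: field_simps)
  have c2: "\<And>Z. Z / (1 - 1/r) = Z * r * c" unfolding c_def using nz by (simp add: field_simps)
  have br: "(N/r)*(L + g - 1/(2*N)) + N*((L + l1x) + g + 1/(2*(N*y)))
          - (N/r)*((L + lx) + g - 1/(2*(N*x))) - N*(-lr) - (N/r)*((1/N)*c)
          + N*((1/(N*y))*c) + (N/r)*((1/(N*x))*c)
        = N * (L + l1x + g + lr) + (N/r) * (- lx) + 
          (- 1/(2*r) + 1/(2*y) + 1/(2*r*x) - c/r + c/y + c/(r*x))"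
    using nz by (simp add: field_simps)
  have k: "(- 1/(2*r) + 1/(2*y) + 1/(2*r*x) - c/r + c/y + c/(r*x)) * r * c
        = (r+1)/(2*(r-1)^2)*(r/y+1/x-1)"
  proof -
    have k1: "(- 1/(2*r) + 1/(2*y) + 1/(2*r*x) - c/r + c/y + c/(r*x)) * r * c = c * (1/2 + c) * (r/y+1/x-1)"
      using nz by (simp add: field_simps)
    define s where "s = r - 1"
    have s0: "s \<noteq> 0" using r by (auto simp: s_def)
    have rs: "r = s + 1" by (simp add: s_def)
    have k2: "c * (1/2 + c) = (r+1)/(2*(r-1)^2)"
      unfolding c_def s_def[symmetric] unfolding rs using s0 by (simp add: field_simps power2_eq_square)
    show ?thesis unfolding k1 k2 ..
  qed
  have m: "(N * (L + l1x + g + lr) + (N/r) * (- lx)) * r * c = r/(r-1)*N*L + r/(r-1)*N*(g + lr + l1x - (1/r)*lx)"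
  proof -
    have rc: "r/(r-1) = r*c" by (simp add: c_def)
    show ?thesis unfolding rc using nz by (simp add: field_simps)
  qed
  have e: "(A + B) * r * c = A * r * c + B * r * c" for A B :: real by (simp add: algebra_simps)
  show ?thesis unfolding c1 unfolding c2 unfolding br unfolding e[of "N * (L + l1x + g + lr) + (N/r) * (- lx)"] k m by simp
qed



lemma absmul: "(0::real) \<le> c \<Longrightarrow> c \<le> c' \<Longrightarrow> \<bar>h\<bar> \<le> b \<Longrightarrow> \<bar>c * h\<bar> \<le> c' * b"
  by (simp add: abs_mult mult_mono)

lemma div_le_self_r: "0 \<le> a \<Longrightarrow> 1 \<le> b \<Longrightarrow> a / (b::real) \<le> a"
proof -
  assume "0 \<le> a" "1 \<le> b"
  hence "a / b \<le> a / 1" by (intro divide_left_mono) auto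
  thus ?thesis by simp
qed

lemma decomp_alg:
  fixes NN NR :: real
  assumes "F1 = NN*(H1 - H0) + NR*H1 - (NN*SA + NR*SB)" "H0 = 0" "F2 = NN*(H1 - H2) + NR*H3 - (NN*SC + NR*SD)"
  shows "F1 - F2 + e*FN = (NR*A1 + NN*A2 - NR*A3 - NN*A4 - NR*A5 + NN*A6 + NR*A7)
     + (NR*(H1-A1) + NN*(H2-A2) - NR*(H3-A3) - NN*(SA-A4) - NR*(SB-A5) + NN*(SC-A6) + NR*(SD-A7) + e*FN)"
  using assms by (simp add: algebra_simps)

lemma asym_gt1:
  fixes r :: real and p q :: nat
  assumes r: "r > 1" and pq: "0 < p" "p < q"
  shows "\<exists>C. \<forall>k\<ge>2. \<bar>Tt (k*q) r (k*p) - (r / (r - 1) * real (k*q) * ln (real (k*q))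
             + r / (r - 1) * real (k*q) * (euler_mascheroni + ln (1 - 1 / r) + ln (1 - real p / real q)
                 - (1 / r) * ln (real p / real q))
             + (r + 1) / (2 * (r - 1)\<^sup>2) * (r / (1 - real p / real q) + 1 / (real p / real q) - 1))\<bar>
           \<le> C / real k"
proof -
  define \<rho> where "\<rho> = 1 / r"
  have \<rho>: "0 < \<rho>" "\<rho> < 1" using r by (auto simp: \<rho>_def)
  obtain B where B0: "B \<ge> 0" and B: "\<And>K. (\<Sum>m\<in>{1..<K}. real m * (real m + 1) * \<rho> ^ m) \<le> B"
    using mm_bound[OF \<rho>] by blast
  obtain C3 where C3: "\<And>n. real n ^ 3 * \<rho> ^ n \<le> C3" using polyexp_bound3[OF \<rho>] by blast
  have C30: "C3 \<ge> 0" using C3[of 0] by simp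
  define Q where "Q = real q"
  define P where "P = real p"
  define W where "W = C3 / (1 - \<rho>)"
  have W0: "W \<ge> 0" using C30 \<rho> by (simp add: W_def)
  define Ctot where "Ctot = (1 + Q + Q + Q*W + (B + W) + (Q*B + Q*W) + (Q*B + Q*W) + 2*Q^2*W) / (1 - \<rho>)"
  show ?thesis
  proof (intro exI[of _ Ctot] allI impI)
    fix k :: nat assume k: "k \<ge> 2"
    define N where "N = k * q"
    define i where "i = k * p"
    define n' where "n' = N - i"
    define kk where "kk = real k"
    define x where "x = real p / real q"
    define NN where "NN = real N"
    have kk: "kk \<ge> 2" using k by (simp add: kk_def)
    have Q: "Q \<ge> 1" "P \<ge> 1" "P < Q" using pq by (auto simp: Q_def P_def)
    have n'eq: "n' = k * (q - p)" by (simp add: n'_def N_def i_def diff_mult_distrib2)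
    have NNeq: "NN = kk * Q" by (simp add: NN_def N_def kk_def Q_def)
    have ieq: "real i = kk * P" by (simp add: i_def kk_def P_def)
    have n'eq2: "real n' = kk * (Q - P)" using pq by (simp add: n'eq kk_def Q_def P_def of_nat_diff)
    have QP: "Q - P \<ge> 1" using pq by (simp add: Q_def P_def) 
    have i_ge: "real i \<ge> kk" using ieq Q kk by simp
    have n'_ge: "real n' \<ge> kk" using n'eq2 QP kk by simp
    have NN_ge: "NN \<ge> kk" using NNeq Q kk by simp
    have i2: "i \<ge> 2" using i_ge kk by linarith
    have n'2: "n' \<ge> 2" using n'_ge kk by linarith
    have N2: "N \<ge> 2" using NN_ge kk unfolding NN_def by linarith
    have iN: "i \<le> N" using pq by (simp add: i_def N_def)
    have xpos: "0 < x" "x < 1" using pq by (auto simp: x_def)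
    have ix: "real i = NN * x" unfolding ieq NNeq x_def P_def Q_def using pq by simp
    have n'x: "real n' = NN * (1 - x)" unfolding n'eq2 NNeq x_def P_def Q_def using pq
      by (simp add: field_simps)
    have NNpos: "NN > 0" using NN_ge kk by simp
    have lni: "ln (real i) = ln NN + ln x" unfolding ix using NNpos xpos by (simp add: ln_mult)
    have lnn': "ln (real n') = ln NN + ln (1 - x)" unfolding n'x using NNpos xpos by (simp add: ln_mult)

    define FN where "FN = Fs N r N"
    define Fi where "Fi = Fs N r i"
    define e where "e = (1 - \<rho>^i) / (1 - \<rho>^N) - 1"
    have Tt_eq: "Tt N r i = (FN - Fi + e * FN) / (1 - \<rho>)"
      unfolding Tt_def FN_def Fi_def e_def \<rho>_def[symmetric] by (simp add: algebra_simps)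

    define L where "L = ln NN"
    define \<gamma> where "\<gamma> = (euler_mascheroni :: real)"
    define c where "c = \<rho> / (1 - \<rho>)"
    define SA where "SA = (\<Sum>m\<in>{1..<N}. \<rho> ^ m / (real (N - N) + real m))"
    define SB where "SB = (\<Sum>m\<in>{1..<N}. \<rho> ^ m / real (N - m))"
    define SC where "SC = (\<Sum>m\<in>{1..<i}. \<rho> ^ m / (real (N - i) + real m))"
    define SD where "SD = (\<Sum>m\<in>{1..<i}. \<rho> ^ m / real (i - m))"
    define h1 where "h1 = harm (N - 1) - (L + \<gamma> - 1 / (2 * NN))"
    define h2 where "h2 = harm n' - ((L + ln (1 - x)) + \<gamma> + 1 / (2 * (NN * (1 - x))))"
    define h3 where "h3 = harm (i - 1) - ((L + ln x) + \<gamma> - 1 / (2 * (NN * x)))"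
    define g1 where "g1 = SA - (- ln (1 - \<rho>))"
    define g2 where "g2 = SB - (1 / NN) * c"
    define g3 where "g3 = SC - (1 / (NN * (1 - x))) * c"
    define g4 where "g4 = SD - (1 / (NN * x)) * c"

    have SN: "(\<Sum>j\<in>{1..<N}. wt N r j) = NN * (harm (N - 1) - harm (N - N)) + NN / r * harm (N - 1)"
      unfolding NN_def using S_formula[of r N N] r N2 by simp
    have Si: "(\<Sum>j\<in>{1..<i}. wt N r j) = NN * (harm (N - 1) - harm n') + NN / r * harm (i - 1)"
      unfolding NN_def n'_def using S_formula[of r i N] r i2 iN by simp
    have GN: "(\<Sum>j\<in>{1..<N}. wt N r j * \<rho> ^ (N - j)) = NN * SA + NN / r * SB"
      unfolding NN_def SA_def SB_def \<rho>_def using G_formula[of N N r] by simp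
    have Gi: "(\<Sum>j\<in>{1..<i}. wt N r j * \<rho> ^ (i - j)) = NN * SC + NN / r * SD"
      unfolding NN_def SC_def SD_def \<rho>_def using G_formula[of i N r] iN by simp
    have FNe: "FN = NN * (harm (N - 1) - harm (N - N)) + NN / r * harm (N - 1) - (NN * SA + NN / r * SB)"
      unfolding FN_def Fs_split \<rho>_def[symmetric] SN GN ..
    have Fie: "Fi = NN * (harm (N - 1) - harm n') + NN / r * harm (i - 1) - (NN * SC + NN / r * SD)"
      unfolding Fi_def Fs_split \<rho>_def[symmetric] Si Gi ..

    have harm0: "harm 0 = (0::real)" by (simp add: harm_def)
    define MAIN where "MAIN = (NN/r)*(L + \<gamma> - 1/(2*NN)) + NN*((L + ln (1 - x)) + \<gamma> + 1/(2*(NN*(1 - x))))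
          - (NN/r)*((L + ln x) + \<gamma> - 1/(2*(NN*x))) - NN*(-ln (1 - \<rho>)) - (NN/r)*((1/NN)*c)
          + NN*((1/(NN*(1 - x)))*c) + (NN/r)*((1/(NN*x))*c)"
    define ERR where "ERR = NN/r*h1 + NN*h2 - NN/r*h3 - NN*g1 - NN/r*g2 + NN*g3 + NN/r*g4 + e*FN"
    have decomp: "FN - Fi + e * FN = MAIN + ERR"
      unfolding MAIN_def ERR_def h1_def h2_def h3_def g1_def g2_def g3_def g4_def
      by (rule decomp_alg[OF FNe _ Fie]) (simp add: harm0)
    have main: "MAIN / (1 - \<rho>) = r / (r - 1) * NN * L + r / (r - 1) * NN * (\<gamma> + ln (1 - \<rho>) + ln (1 - x) - \<rho> * ln x)
             + (r + 1) / (2 * (r - 1)\<^sup>2) * (r / (1 - x) + 1 / x - 1)"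
      using main_identity[of r NN x "1 - x" L \<gamma> "ln (1 - x)" "ln x" "ln (1 - \<rho>)"] r NNpos xpos
      unfolding MAIN_def c_def \<rho>_def by simp
    have diff_eq: "Tt N r i - (r / (r - 1) * NN * L + r / (r - 1) * NN * (\<gamma> + ln (1 - \<rho>) + ln (1 - x) - \<rho> * ln x)
             + (r + 1) / (2 * (r - 1)\<^sup>2) * (r / (1 - x) + 1 / x - 1)) = ERR / (1 - \<rho>)"
      unfolding Tt_eq decomp main[symmetric] using \<rho> by (simp add: add_divide_distrib)
    show "\<bar>Tt (k*q) r (k*p) - (r / (r - 1) * real (k*q) * ln (real (k*q))
             + r / (r - 1) * real (k*q) * (euler_mascheroni + ln (1 - 1 / r) + ln (1 - real p / real q)
                 - (1 / r) * ln (real p / real q))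
             + (r + 1) / (2 * (r - 1)\<^sup>2) * (r / (1 - real p / real q) + 1 / (real p / real q) - 1))\<bar>
           \<le> Ctot / real k"
    proof -
      have "\<bar>ERR\<bar> \<le> Ctot * (1 - \<rho>) / kk"
      proof -
        have kpos: "kk > 0" using kk by simp
        have n'pos: "real n' > 0" using n'_ge kk by simp
        have ipos: "real i > 0" using i_ge kk by simp
        have Q0: "Q \<ge> 0" using Q by simp
        have kN: "k \<le> N" using pq by (simp add: N_def)
        have ki: "k \<le> i" using pq by (simp add: i_def)
        have pN: "\<rho> ^ N \<le> \<rho> ^ k" using \<rho> kN by (intro power_decreasing) auto
        have pi: "\<rho> ^ i \<le> \<rho> ^ k" using \<rho> ki by (intro power_decreasing) auto
        have C3k: "kk ^ 3 * \<rho> ^ k \<le> C3" using C3[of k] by (simp add: kk_def)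
        have pk0: "\<rho> ^ k \<ge> 0" using \<rho> by simp
        have R2': "kk ^ 2 * \<rho> ^ k \<le> C3 / kk"
        proof -
          have "kk ^ 2 * \<rho> ^ k * kk = kk ^ 3 * \<rho> ^ k" by (simp add: eval_nat_numeral)
          hence "kk ^ 2 * \<rho> ^ k * kk \<le> C3" using C3k by linarith
          thus ?thesis using kpos by (simp add: field_simps)
        qed
        have R1': "kk * \<rho> ^ k \<le> C3 / kk"
        proof -
          have "kk * \<rho> ^ k \<le> kk ^ 2 * \<rho> ^ k"
            using kk pk0 by (intro mult_right_mono) (auto simp: power2_eq_square)
          thus ?thesis using R2' by linarith
        qed
        have R0': "\<rho> ^ k \<le> C3 / kk"
        proof -
          have "1 * \<rho> ^ k \<le> kk * \<rho> ^ k" by (rule mult_right_mono) (use kk pk0 in auto)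
          thus ?thesis using R1' by linarith
        qed
        have hb1: "\<bar>h1\<bar> \<le> 1 / NN ^ 2"
          using harm_approx[OF N2] unfolding h1_def L_def \<gamma>_def NN_def .
        have hn': "harm n' = harm (n' - 1) + 1 / real n'"
        proof -
          have "n' = Suc (n' - 1)" using n'2 by simp
          hence "harm n' = (harm (Suc (n' - 1)) :: real)" by simp
          also have "\<dots> = harm (n' - 1) + 1 / real n'"
            unfolding harm_Suc using n'2 by (simp add: inverse_eq_divide)
          finally show ?thesis .
        qed
        have hb2: "\<bar>h2\<bar> \<le> 1 / real n' ^ 2"
        proof -
          have "h2 = harm (n' - 1) - (ln (real n') + \<gamma> - 1 / (2 * real n'))"
            unfolding h2_def L_def lnn'[symmetric] n'x[symmetric] hn' using n'pos by (simp add: field_simps)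
          thus ?thesis using harm_approx[OF n'2] unfolding \<gamma>_def by simp
        qed
        have hb3: "\<bar>h3\<bar> \<le> 1 / real i ^ 2"
          using harm_approx[OF i2] unfolding h3_def L_def lni[symmetric] ix[symmetric] \<gamma>_def .
        have gb1: "\<bar>g1\<bar> \<le> \<rho> ^ N / (1 - \<rho>)"
          using log_series_bound[OF \<rho>, of N] unfolding g1_def SA_def by simp
        have gb2: "\<bar>g2\<bar> \<le> B / NN ^ 2 + \<rho> ^ N / (NN * (1 - \<rho>))"
          using Lb_bound[OF \<rho> _ B, of N] N2 unfolding g2_def SB_def NN_def c_def by simp
        have gb3: "\<bar>g3\<bar> \<le> B / real n' ^ 2 + \<rho> ^ i / (real n' * (1 - \<rho>))"
          using La_bound[OF \<rho> n'pos _ B, of i] i2 unfolding g3_def SC_def n'x[symmetric] c_def n'_def by simp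
        have gb4: "\<bar>g4\<bar> \<le> B / real i ^ 2 + \<rho> ^ i / (real i * (1 - \<rho>))"
          using Lb_bound[OF \<rho> _ B, of i] i2 unfolding g4_def SD_def ix[symmetric] c_def by simp
        have eb: "\<bar>e\<bar> \<le> \<rho> ^ k / (1 - \<rho>)"
        proof -
          have pN1: "\<rho> ^ N \<le> \<rho>" using \<rho> N2 power_decreasing[of 1 N \<rho>] by simp
          have dpos: "1 - \<rho> ^ N \<ge> 1 - \<rho>" using pN1 by simp
          have d0: "1 - \<rho> > 0" using \<rho> by simp
          have e_eq: "e = (\<rho> ^ N - \<rho> ^ i) / (1 - \<rho> ^ N)"
            unfolding e_def using d0 dpos by (simp add: field_simps)
          have piN: "\<rho> ^ N \<le> \<rho> ^ i" using \<rho> iN by (intro power_decreasing) auto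
          have "\<bar>\<rho> ^ N - \<rho> ^ i\<bar> \<le> \<rho> ^ i" using piN \<rho> by simp
          hence "\<bar>e\<bar> \<le> \<rho> ^ i / (1 - \<rho> ^ N)" unfolding e_eq using d0 dpos
            by (simp add: abs_divide divide_right_mono)
          also have "\<dots> \<le> \<rho> ^ i / (1 - \<rho>)" using d0 dpos \<rho> by (intro divide_left_mono) auto
          also have "\<dots> \<le> \<rho> ^ k / (1 - \<rho>)" using pi d0 by (intro divide_right_mono) auto
          finally show ?thesis .
        qed
        have FNb: "\<bar>FN\<bar> \<le> 2 * NN ^ 2"
        proof -
          have tb: "0 \<le> wt N r j * (1 - \<rho> ^ (N - j)) \<and> wt N r j * (1 - \<rho> ^ (N - j)) \<le> 2 * NN"
            if j: "j \<in> {1..<N}" for j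
          proof -
            have w0: "wt N r j \<ge> 0" using r by (intro wt_nonneg) auto
            have q1: "0 \<le> 1 - \<rho> ^ (N - j)" "1 - \<rho> ^ (N - j) \<le> 1" using \<rho> by (auto simp: power_le_one)
            have a1: "NN / real (N - j) \<le> NN" using j NNpos by (intro div_le_self_r) auto
            have "r * real j \<ge> 1 * 1" using j r by (intro mult_mono) auto
            hence a2: "NN / (r * real j) \<le> NN" using NNpos by (intro div_le_self_r) auto
            have "wt N r j \<le> 2 * NN" using a1 a2 unfolding wt_def NN_def by simp
            moreover have "wt N r j * (1 - \<rho> ^ (N - j)) \<le> wt N r j" using w0 q1 by (simp add: mult_left_le)
            ultimately show ?thesis using w0 q1 by simp
          qed
          have FNs: "FN = (\<Sum>j\<in>{1..<N}. wt N r j * (1 - \<rho> ^ (N - j)))"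
            unfolding FN_def Fs_def \<rho>_def ..
          have "FN \<ge> 0" unfolding FNs using tb by (intro sum_nonneg) auto
          moreover have "FN \<le> (\<Sum>j\<in>{1..<N}. 2 * NN)" unfolding FNs using tb by (intro sum_mono) auto
          moreover have "(\<Sum>j\<in>{1..<N}. 2 * NN) \<le> 2 * NN ^ 2"
          proof -
            have "(\<Sum>j\<in>{1..<N}. 2 * NN) = real (N - 1) * (2 * NN)" by simp
            also have "\<dots> \<le> NN * (2 * NN)" using NNpos N2 by (intro mult_right_mono) (auto simp: NN_def)
            finally show ?thesis by (simp add: power2_eq_square)
          qed
          ultimately show ?thesis by simp
        qed
        have rle: "NN / r \<le> NN" "NN / r \<ge> 0" using r NNpos by (auto intro: div_le_self_r)
        have sq: "NN * (1 / a ^ 2) \<le> Q / kk" if "a \<ge> kk" for a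
        proof -
          have "a ^ 2 \<ge> kk ^ 2" using that kpos by (intro power_mono) auto
          moreover have "a > 0" using that kpos by simp
          ultimately have "1 / a ^ 2 \<le> 1 / kk ^ 2" using kpos by (intro divide_left_mono mult_pos_pos) auto
          hence "NN * (1 / a ^ 2) \<le> NN * (1 / kk ^ 2)" using NNpos by (intro mult_left_mono) auto
          also have "\<dots> = Q / kk" unfolding NNeq using kpos by (simp add: power2_eq_square)
          finally show ?thesis .
        qed
        have lin: "NN / a \<le> Q" if "a \<ge> kk" for a
        proof -
          have "NN / a \<le> NN / kk" using that kpos NNpos by (intro divide_left_mono) auto
          also have "\<dots> = Q" unfolding NNeq using kpos by simp
          finally show ?thesis .
        qed
        have T1: "\<bar>NN / r * h1\<bar> \<le> 1 / kk"
        proof -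
          have "\<bar>NN / r * h1\<bar> \<le> NN * (1 / NN ^ 2)" using rle hb1 by (intro absmul) auto
          also have "\<dots> = 1 / NN" using NNpos by (simp add: power2_eq_square)
          also have "\<dots> \<le> 1 / kk" using NN_ge kpos by (intro divide_left_mono) auto
          finally show ?thesis .
        qed
        have T2: "\<bar>NN * h2\<bar> \<le> Q / kk"
        proof -
          have "\<bar>NN * h2\<bar> \<le> NN * (1 / real n' ^ 2)" using NNpos hb2 by (intro absmul) auto
          also have "\<dots> \<le> Q / kk" by (rule sq[OF n'_ge])
          finally show ?thesis .
        qed
        have T3: "\<bar>NN / r * h3\<bar> \<le> Q / kk"
        proof -
          have "\<bar>NN / r * h3\<bar> \<le> NN * (1 / real i ^ 2)" using rle hb3 by (intro absmul) auto
          also have "\<dots> \<le> Q / kk" by (rule sq[OF i_ge])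
          finally show ?thesis .
        qed
        have T4: "\<bar>NN * g1\<bar> \<le> Q * W / kk"
        proof -
          have "\<bar>NN * g1\<bar> \<le> NN * (\<rho> ^ k / (1 - \<rho>))"
          proof (rule absmul)
            have "\<rho> ^ N / (1 - \<rho>) \<le> \<rho> ^ k / (1 - \<rho>)" by (rule divide_right_mono[OF pN]) (use \<rho> in simp)
            thus "\<bar>g1\<bar> \<le> \<rho> ^ k / (1 - \<rho>)" using gb1 by linarith
          qed (use NNpos in auto)
          also have "\<dots> = Q * (kk * \<rho> ^ k) / (1 - \<rho>)" unfolding NNeq by simp
          also have "\<dots> \<le> Q * (C3 / kk) / (1 - \<rho>)"
            using R1' Q0 \<rho> by (intro divide_right_mono mult_left_mono) auto
          also have "\<dots> = Q * W / kk" unfolding W_def by simp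
          finally show ?thesis .
        qed
        have T5: "\<bar>NN / r * g2\<bar> \<le> (B + W) / kk"
        proof -
          have "\<bar>NN / r * g2\<bar> \<le> NN * (B / NN ^ 2 + \<rho> ^ N / (NN * (1 - \<rho>)))"
            using rle gb2 by (intro absmul) auto
          also have "\<dots> = B / NN + \<rho> ^ N / (1 - \<rho>)"
          proof -
            have a: "NN * (B / NN ^ 2) = B / NN" using NNpos by (simp add: power2_eq_square)
            have b: "NN * (\<rho> ^ N / (NN * (1 - \<rho>))) = \<rho> ^ N / (1 - \<rho>)" using NNpos by simp
            show ?thesis unfolding distrib_left a b ..
          qed
          also have "\<dots> \<le> B / kk + (C3 / kk) / (1 - \<rho>)"
          proof (intro add_mono)
            show "B / NN \<le> B / kk" using B0 NN_ge kpos by (intro divide_left_mono) auto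
            show "\<rho> ^ N / (1 - \<rho>) \<le> (C3 / kk) / (1 - \<rho>)"
              by (rule divide_right_mono) (use pN R0' \<rho> in linarith, use \<rho> in simp)
          qed
          also have "\<dots> = (B + W) / kk" unfolding W_def by (simp add: add_divide_distrib)
          finally show ?thesis .
        qed
        have T6gen: "\<bar>cc * g\<bar> \<le> (Q * B + Q * W) / kk"
          if cc: "0 \<le> cc" "cc \<le> NN" and a: "a \<ge> kk" and g: "\<bar>g\<bar> \<le> B / a ^ 2 + \<rho> ^ i / (a * (1 - \<rho>))" for cc g a
        proof -
          have apos: "a > 0" using a kpos by simp
          have "\<bar>cc * g\<bar> \<le> NN * (B / a ^ 2 + \<rho> ^ i / (a * (1 - \<rho>)))"
            using cc g by (intro absmul) auto
          also have "\<dots> = B * (NN * (1 / a ^ 2)) + (NN / a) * (\<rho> ^ i / (1 - \<rho>))"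
            using apos by (simp add: field_simps)
          also have "\<dots> \<le> B * (Q / kk) + Q * ((C3 / kk) / (1 - \<rho>))"
          proof (intro add_mono mult_mono)
            show "NN * (1 / a ^ 2) \<le> Q / kk" by (rule sq[OF a])
            show "NN / a \<le> Q" by (rule lin[OF a])
            show "\<rho> ^ i / (1 - \<rho>) \<le> (C3 / kk) / (1 - \<rho>)"
              by (rule divide_right_mono) (use pi R0' \<rho> in linarith, use \<rho> in simp)
          qed (use B0 Q0 \<rho> C30 kpos apos NNpos in auto)
          also have "\<dots> = (Q * B + Q * W) / kk"
          proof -
            have "Q * ((C3 / kk) / (1 - \<rho>)) = Q * W / kk" unfolding W_def by simp
            moreover have "B * (Q / kk) = Q * B / kk" by simp
            ultimately show ?thesis by (simp add: add_divide_distrib)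
          qed
          finally show ?thesis .
        qed
        have T6: "\<bar>NN * g3\<bar> \<le> (Q * B + Q * W) / kk"
          by (rule T6gen[OF _ _ n'_ge gb3]) (use NNpos in auto)
        have T7: "\<bar>NN / r * g4\<bar> \<le> (Q * B + Q * W) / kk"
          by (rule T6gen[OF rle(2) rle(1) i_ge gb4])
        have T8: "\<bar>e * FN\<bar> \<le> 2 * Q ^ 2 * W / kk"
        proof -
          have "\<bar>e * FN\<bar> \<le> (\<rho> ^ k / (1 - \<rho>)) * (2 * NN ^ 2)"
            unfolding abs_mult using eb FNb by (intro mult_mono) auto
          also have "\<dots> = 2 * Q ^ 2 * (kk ^ 2 * \<rho> ^ k) / (1 - \<rho>)" unfolding NNeq
            by (simp add: power_mult_distrib)
          also have "\<dots> \<le> 2 * Q ^ 2 * (C3 / kk) / (1 - \<rho>)"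
            using R2' \<rho> by (intro divide_right_mono mult_left_mono) auto
          also have "\<dots> = 2 * Q ^ 2 * W / kk" unfolding W_def by simp
          finally show ?thesis .
        qed
        have sumeq: "Ctot * (1 - \<rho>) / kk = 1 / kk + Q / kk + Q / kk + Q * W / kk + (B + W) / kk
            + (Q * B + Q * W) / kk + (Q * B + Q * W) / kk + 2 * Q ^ 2 * W / kk"
        proof -
          have c1: "Ctot * (1 - \<rho>) = 1 + Q + Q + Q*W + (B + W) + (Q*B + Q*W) + (Q*B + Q*W) + 2*Q^2*W"
            unfolding Ctot_def using \<rho> by simp
          show ?thesis unfolding c1 by (simp only: add_divide_distrib)
        qed
        show ?thesis unfolding sumeq ERR_def using T1 T2 T3 T4 T5 T6 T7 T8
          by (simp only: abs_le_iff) linarith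
      qed
      hence "\<bar>ERR / (1 - \<rho>)\<bar> \<le> Ctot / kk"
      proof -
        assume a: "\<bar>ERR\<bar> \<le> Ctot * (1 - \<rho>) / kk"
        have "\<bar>ERR / (1 - \<rho>)\<bar> = \<bar>ERR\<bar> / (1 - \<rho>)" using \<rho> by (simp add: abs_divide)
        also have "\<dots> \<le> (Ctot * (1 - \<rho>) / kk) / (1 - \<rho>)" by (rule divide_right_mono[OF a]) (use \<rho> in auto)
        also have "\<dots> = Ctot / kk" using \<rho> by simp
        finally show ?thesis .
      qed
      thus ?thesis
        unfolding N_def[symmetric] i_def[symmetric] NN_def[symmetric] L_def[symmetric] \<gamma>_def[symmetric]
          \<rho>_def[symmetric] x_def[symmetric] kk_def[symmetric] diff_eq .
    qed
  qed
qed



lemma sym_consts: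
  fixes r :: real assumes "0 < r" "r < 1"
  shows "(1/r) / ((1/r) - 1) = 1 / (1 - r)"
        "((1/r) + 1) / (2 * ((1/r) - 1)\<^sup>2) = r * (1 + r) / (2 * (1 - r)\<^sup>2)"
        "ln (1 - 1 / (1/r)) = ln (1 - r)"
        "1 / (1/r) = r"
proof -
  have nz: "r \<noteq> 0" "1 - r \<noteq> 0" using assms by auto
  show "(1/r) / ((1/r) - 1) = 1 / (1 - r)" using nz by (simp add: field_simps)
  have e: "(1/r) - 1 = (1 - r) / r" using nz by (simp add: field_simps)
  show "((1/r) + 1) / (2 * ((1/r) - 1)\<^sup>2) = r * (1 + r) / (2 * (1 - r)\<^sup>2)"
  proof -
    define d where "d = (1 - r)\<^sup>2"
    have d: "d \<noteq> 0" using nz by (simp add: d_def)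
    have e2: "((1 - r) / r)\<^sup>2 = d / r^2" by (simp add: d_def power_divide)
    have e3: "1/r + 1 = (1 + r) / r" using nz by (simp add: field_simps)
    show ?thesis unfolding e e2 e3 d_def[symmetric] using nz d by (simp add: field_simps power2_eq_square)
  qed
  show "ln (1 - 1 / (1/r)) = ln (1 - r)" by simp
  show "1 / (1/r) = r" by simp
qed

theorem theorem4:
  fixes r :: real and p q :: nat
  assumes "r > 0" and "r \<noteq> 1"
    and "0 < p" and "p < q" and "coprime p q"
  defines "x \<equiv> real p / real q"
  shows
   "(r > 1 \<longrightarrow>
      (\<exists>C N0. \<forall>k. let N = k * q in N \<ge> N0 \<longrightarrow>
         \<bar>moran_time N r (k * p)
          - (r / (r - 1) * real N * ln (real N)
             + r / (r - 1) * real N * (euler_mascheroni + ln (1 - 1 / r) + ln (1 - x) - (1 / r) * ln x)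
             + (r + 1) / (2 * (r - 1)\<^sup>2) * (r / (1 - x) + 1 / x - 1))\<bar> \<le> C / real N))
    \<and> (r < 1 \<longrightarrow>
      (\<exists>C N0. \<forall>k. let N = k * q in N \<ge> N0 \<longrightarrow>
         \<bar>moran_time N r (k * p)
          - (1 / (1 - r) * real N * ln (real N)
             + 1 / (1 - r) * real N * (euler_mascheroni + ln (1 - r) + ln x - r * ln (1 - x))
             + r * (1 + r) / (2 * (1 - r)\<^sup>2) * (1 / (r * x) + 1 / (1 - x) - 1))\<bar> \<le> C / real N))"
proof (intro conjI impI)
  have q0: "q > 0" "real q > 0" using assms by auto
  have kge: "k \<ge> 2" if "k * q \<ge> 2 * q" for k using that q0 by simp
  have rk: "C / real k = (C * real q) / real (k * q)" for C :: real and k using q0 by simp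
  {
    assume r1: "r > 1"
    obtain C where C: "\<And>k. k \<ge> 2 \<Longrightarrow> \<bar>Tt (k*q) r (k*p) - (r / (r - 1) * real (k*q) * ln (real (k*q))
             + r / (r - 1) * real (k*q) * (euler_mascheroni + ln (1 - 1 / r) + ln (1 - real p / real q)
                 - (1 / r) * ln (real p / real q))
             + (r + 1) / (2 * (r - 1)\<^sup>2) * (r / (1 - real p / real q) + 1 / (real p / real q) - 1))\<bar>
           \<le> C / real k"
      using asym_gt1[OF r1 assms(3,4)] by blast
    show "\<exists>C N0. \<forall>k. let N = k * q in N \<ge> N0 \<longrightarrow>
         \<bar>moran_time N r (k * p)
          - (r / (r - 1) * real N * ln (real N)
             + r / (r - 1) * real N * (euler_mascheroni + ln (1 - 1 / r) + ln (1 - x) - (1 / r) * ln x)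
             + (r + 1) / (2 * (r - 1)\<^sup>2) * (r / (1 - x) + 1 / x - 1))\<bar> \<le> C / real N"
    proof (intro exI[of _ "C * real q"] exI[of _ "2 * q"] allI)
      fix k
      show "let N = k * q in N \<ge> 2 * q \<longrightarrow>
         \<bar>moran_time N r (k * p)
          - (r / (r - 1) * real N * ln (real N)
             + r / (r - 1) * real N * (euler_mascheroni + ln (1 - 1 / r) + ln (1 - x) - (1 / r) * ln x)
             + (r + 1) / (2 * (r - 1)\<^sup>2) * (r / (1 - x) + 1 / x - 1))\<bar> \<le> C * real q / real N"
        unfolding Let_def
      proof
        assume "k * q \<ge> 2 * q"
        hence k2: "k \<ge> 2" by (rule kge)
        have mt: "moran_time (k * q) r (k * p) = Tt (k * q) r (k * p)"
          using r1 k2 assms(4) q0 by (intro moran_time_gt1) auto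
        show "\<bar>moran_time (k * q) r (k * p)
          - (r / (r - 1) * real (k * q) * ln (real (k * q))
             + r / (r - 1) * real (k * q) * (euler_mascheroni + ln (1 - 1 / r) + ln (1 - x) - (1 / r) * ln x)
             + (r + 1) / (2 * (r - 1)\<^sup>2) * (r / (1 - x) + 1 / x - 1))\<bar> \<le> C * real q / real (k * q)"
          using C[OF k2] unfolding mt rk[of C k] x_def .
      qed
    qed
  }
  {
    assume r1: "r < 1"
    have r': "1 / r > 1" using r1 assms(1) by simp
    have pq': "0 < q - p" "q - p < q" using assms by auto
    obtain C where C: "\<And>k. k \<ge> 2 \<Longrightarrow> \<bar>Tt (k*q) (1/r) (k*(q-p)) - ((1/r) / ((1/r) - 1) * real (k*q) * ln (real (k*q))
             + (1/r) / ((1/r) - 1) * real (k*q) * (euler_mascheroni + ln (1 - 1 / (1/r)) + ln (1 - real (q-p) / real q)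
                 - (1 / (1/r)) * ln (real (q-p) / real q))
             + ((1/r) + 1) / (2 * ((1/r) - 1)\<^sup>2) * ((1/r) / (1 - real (q-p) / real q) + 1 / (real (q-p) / real q) - 1))\<bar>
           \<le> C / real k"
      using asym_gt1[OF r' pq'] by blast
    have xq: "real (q-p) / real q = 1 - x" unfolding x_def using assms q0 by (simp add: of_nat_diff field_simps)
    have x1: "1 - (1 - x) = x" by simp
    have c3: "(1/r) / x = 1 / (r * x)" by simp
    note sc = sym_consts[OF assms(1) r1]
    show "\<exists>C N0. \<forall>k. let N = k * q in N \<ge> N0 \<longrightarrow>
         \<bar>moran_time N r (k * p)
          - (1 / (1 - r) * real N * ln (real N)
             + 1 / (1 - r) * real N * (euler_mascheroni + ln (1 - r) + ln x - r * ln (1 - x))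
             + r * (1 + r) / (2 * (1 - r)\<^sup>2) * (1 / (r * x) + 1 / (1 - x) - 1))\<bar> \<le> C / real N"
    proof (intro exI[of _ "C * real q"] exI[of _ "2 * q"] allI)
      fix k
      show "let N = k * q in N \<ge> 2 * q \<longrightarrow>
         \<bar>moran_time N r (k * p)
          - (1 / (1 - r) * real N * ln (real N)
             + 1 / (1 - r) * real N * (euler_mascheroni + ln (1 - r) + ln x - r * ln (1 - x))
             + r * (1 + r) / (2 * (1 - r)\<^sup>2) * (1 / (r * x) + 1 / (1 - x) - 1))\<bar> \<le> C * real q / real N"
        unfolding Let_def
      proof
        assume "k * q \<ge> 2 * q"
        hence k2: "k \<ge> 2" by (rule kge)
        have kk: "k * q - k * p = k * (q - p)" by (simp add: diff_mult_distrib2)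
        have mt: "moran_time (k * q) r (k * p) = Tt (k * q) (1/r) (k * (q - p))"
          using moran_time_lt1[OF assms(1) r1, of "k * p" "k * q"] k2 assms(4) q0 unfolding kk by auto
        have e3: "1 / (1 - x) = 1 / (1 - x)" ..
        show "\<bar>moran_time (k * q) r (k * p)
          - (1 / (1 - r) * real (k * q) * ln (real (k * q))
             + 1 / (1 - r) * real (k * q) * (euler_mascheroni + ln (1 - r) + ln x - r * ln (1 - x))
             + r * (1 + r) / (2 * (1 - r)\<^sup>2) * (1 / (r * x) + 1 / (1 - x) - 1))\<bar> \<le> C * real q / real (k * q)"
          using C[OF k2] unfolding mt rk[of C k] xq x1 sc c3 .
      qed
    qed
  }
qed

end
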